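(* Under the standing assumptions, for every demand vector $\vec v$ with at least four non-zero entries, there is at most one task of type 1 with respect to $\vec v$.
   Context: Standing assumptions: $n\ge 4$, $k\ge 5$, and $f_1,\dots,f_n$ are functions from demand vectors to $[k]$ satisfying the demand (for every demand vector $\vec v$ and task $j$, exactly $v_j$ agents $a$ have $f_a(\vec v)=j$), with maximum switching cost at most $2$. A demand vector is $\vec v=(v_1,\dots,v_k)$ of non-negative integers with $\sum v_j=n$; task $j$ is non-empty in $\vec v$ if $v_j\ge1$. The switching cost of $(\vec v,\vec v')$ is the number of agents $a$ with $f_a(\vec v)\ne f_a(\vec v')$; $\vec v,\vec v'$ are adjacent if $\|\vec v-\vec v'\|_1=2$. An ordered pair $(\vec v_1,\vec v_2)$ is $(s,t)$-adjacent if $s\ne t$ and $\vec v_2$ is obtained from $\vec v_1$ by moving one unit of demand from task $s$ to task $t$. Agent $a$ is $(i,j)$-mobile with respect to $(\vec v_1,\vec v_2)$ if $f_a(\vec v_1)=i$, $f_a(\vec v_2)=j$, $i\ne j$. If $(\vec v_1,\vec v_2)$ is $(s,t)$-adjacent with switching cost $2$, then there is a task $i\notin\{s,t\}$ such that one switching agent is $(s,i)$-mobile and the other is $(i,t)$-mobile; $i$ is called the intermediate task of $(\vec v_1,\vec v_2)$. A task $t$ is of type 1 with respect to $\vec v$ if for every task $s\ne t$ non-empty in $\vec v$, the $(s,t)$-adjacent pair starting at $\vec v$ has switching cost $1$. A task $t$ is of type 2 with respect to $\vec v$ if there exist a task $i$ and an agent $a$ such that for every task $s\notin\{i,t\}$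 non-empty in $\vec v$, the $(s,t)$-adjacent pair starting at $\vec v$ has switching cost $2$, intermediate task $i$, and $(i,t)$-mobile agent $a$; then $i$ is the intermediate task of $t$ with respect to $\vec v$. *)

theory Defs
  imports Main
begin

text \<open>Tasks are 1..k, agents are 1..n. A demand vector is a function nat => nat
  that vanishes outside 1..k and sums to n over 1..k.
  An assignment is f :: agent => demand vector => task.\<close>

definition demand_vec :: "nat \<Rightarrow> nat \<Rightarrow> (nat \<Rightarrow> nat) \<Rightarrow> bool" where
  "demand_vec n k v \<longleftrightarrow> (\<forall>j. j \<notin> {1..k} \<longrightarrow> v j = 0) \<and> (\<Sum>j\<in>{1..k}. v j) = n"

definition satisfies_demand :: "nat \<Rightarrow> nat \<Rightarrow> (nat \<Rightarrow> (nat \<Rightarrow> nat) \<Rightarrow> nat) \<Rightarrow> bool" where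
  "satisfies_demand n k f \<longleftrightarrow>
     (\<forall>v. demand_vec n k v \<longrightarrow>
        (\<forall>a\<in>{1..n}. f a v \<in> {1..k}) \<and>
        (\<forall>j\<in>{1..k}. card {a\<in>{1..n}. f a v = j} = v j))"

definition switching_cost :: "nat \<Rightarrow> (nat \<Rightarrow> (nat \<Rightarrow> nat) \<Rightarrow> nat) \<Rightarrow> (nat \<Rightarrow> nat) \<Rightarrow> (nat \<Rightarrow> nat) \<Rightarrow> nat" where
  "switching_cost n f v v' = card {a\<in>{1..n}. f a v \<noteq> f a v'}"

definition adjacent :: "nat \<Rightarrow> (nat \<Rightarrow> nat) \<Rightarrow> (nat \<Rightarrow> nat) \<Rightarrow> bool" where
  "adjacent k v v' \<longleftrightarrow> (\<Sum>j\<in>{1..k}. nat \<bar>int (v j) - int (v' j)\<bar>) = 2"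

definition max_switch_le2 :: "nat \<Rightarrow> nat \<Rightarrow> (nat \<Rightarrow> (nat \<Rightarrow> nat) \<Rightarrow> nat) \<Rightarrow> bool" where
  "max_switch_le2 n k f \<longleftrightarrow>
     (\<forall>v v'. demand_vec n k v \<and> demand_vec n k v' \<and> adjacent k v v' \<longrightarrow>
        switching_cost n f v v' \<le> 2)"

text \<open>The demand vector obtained from v by moving one unit of demand from s to t
  (only meaningful when s \<noteq> t and v s \<ge> 1).\<close>
definition move :: "(nat \<Rightarrow> nat) \<Rightarrow> nat \<Rightarrow> nat \<Rightarrow> (nat \<Rightarrow> nat)" where
  "move v s t = v(s := v s - 1, t := v t + 1)"

definition type1 :: "nat \<Rightarrow> nat \<Rightarrow> (nat \<Rightarrow> (nat \<Rightarrow> nat) \<Rightarrow> nat) \<Rightarrow> (nat \<Rightarrow> nat) \<Rightarrow> nat \<Rightarrow> bool" where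
  "type1 n k f v t \<longleftrightarrow>
     (\<forall>s\<in>{1..k}. s \<noteq> t \<and> v s \<ge> 1 \<longrightarrow> switching_cost n f v (move v s t) = 1)"

end

theory Submission
  imports Defs
begin


lemma sum_two:
  assumes "finite K" "s \<in> K" "t \<in> K" "s \<noteq> t"
  shows "sum h K = h s + h t + sum h (K - {s} - {t})"
proof -
  have "sum h K = h s + sum h (K - {s})" using assms by (simp add: sum.remove)
  moreover have "sum h (K - {s}) = h t + sum h (K - {s} - {t})" using assms by (simp add: sum.remove)
  ultimately show ?thesis by (simp add: add.assoc)
qed

lemma move_demand:
  assumes "demand_vec n k v" "s \<in> {1..k}" "t \<in> {1..k}" "s \<noteq> t" "v s \<ge> 1"
  shows "demand_vec n k (move v s t)"
proof -
  let ?w = "move v s t"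
  have out: "\<forall>j. j \<notin> {1..k} \<longrightarrow> ?w j = 0" using assms by (auto simp: move_def demand_vec_def)
  have "sum ?w {1..k} = ?w s + ?w t + sum ?w ({1..k} - {s} - {t})"
    using assms by (intro sum_two) auto
  also have "sum ?w ({1..k} - {s} - {t}) = sum v ({1..k} - {s} - {t})"
    by (rule sum.cong) (auto simp: move_def)
  also have "?w s + ?w t = v s + v t" using assms by (auto simp: move_def)
  also have "v s + v t + sum v ({1..k} - {s} - {t}) = sum v {1..k}"
    using assms by (intro sum_two[symmetric]) auto
  finally show ?thesis using out assms by (simp add: demand_vec_def)
qed

lemma move_adjacent:
  assumes "s \<in> {1..k}" "t \<in> {1..k}" "s \<noteq> t" "v s \<ge> 1"
  shows "adjacent k v (move v s t)"
proof -
  let ?h = "\<lambda>j. nat \<bar>int (v j) - int (move v s t j)\<bar>"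
  have "sum ?h {1..k} = ?h s + ?h t + sum ?h ({1..k} - {s} - {t})"
    using assms by (intro sum_two) auto
  also have "sum ?h ({1..k} - {s} - {t}) = 0"
    by (rule sum.neutral) (auto simp: move_def)
  also have "?h s = 1" using assms by (auto simp: move_def)
  also have "?h t = 1" using assms by (auto simp: move_def)
  finally show ?thesis by (simp add: adjacent_def)
qed

lemma leave:
  assumes sat: "satisfies_demand n k f" and dw: "demand_vec n k w" and dw': "demand_vec n k w'"
    and j: "j \<in> {1..k}" and lt: "w' j < w j"
  shows "\<exists>x\<in>{1..n}. f x w = j \<and> f x w' \<noteq> j"
proof (rule ccontr)
  assume "\<not> ?thesis"
  hence "{x\<in>{1..n}. f x w = j} \<subseteq> {x\<in>{1..n}. f x w' = j}" by auto
  hence "card {x\<in>{1..n}. f x w = j} \<le> card {x\<in>{1..n}. f x w' = j}" by (intro card_mono) auto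
  moreover have "card {x\<in>{1..n}. f x w = j} = w j" using sat dw j by (auto simp: satisfies_demand_def)
  moreover have "card {x\<in>{1..n}. f x w' = j} = w' j" using sat dw' j by (auto simp: satisfies_demand_def)
  ultimately show False using lt by simp
qed

lemma three_diff:
  assumes ms: "max_switch_le2 n k f" and dw: "demand_vec n k w"
    and s: "s \<in> {1..k}" and t: "t \<in> {1..k}" and st: "s \<noteq> t" and ws: "w s \<ge> 1"
    and xyz: "x \<in> {1..n}" "y \<in> {1..n}" "z \<in> {1..n}" "x \<noteq> y" "x \<noteq> z" "y \<noteq> z"
    and d: "f x w \<noteq> f x (move w s t)" "f y w \<noteq> f y (move w s t)" "f z w \<noteq> f z (move w s t)"
  shows False
proof -
  have "demand_vec n k (move w s t)" using move_demand[OF dw s t st ws] .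
  moreover have "adjacent k w (move w s t)" using move_adjacent[of s k t w] s t st ws by blast
  ultimately have le: "switching_cost n f w (move w s t) \<le> 2" using ms dw by (auto simp: max_switch_le2_def)
  have "{x,y,z} \<subseteq> {a\<in>{1..n}. f a w \<noteq> f a (move w s t)}" using xyz d by auto
  hence "card {x,y,z} \<le> switching_cost n f w (move w s t)"
    unfolding switching_cost_def by (intro card_mono) auto
  moreover have "card {x,y,z} = 3" using xyz by auto
  ultimately show False using le by simp
qed

lemma cost1:
  assumes sat: "satisfies_demand n k f" and dv: "demand_vec n k v"
    and s: "s \<in> {1..k}" and t: "t \<in> {1..k}" and st: "s \<noteq> t" and vs: "v s \<ge> 1"
    and c1: "switching_cost n f v (move v s t) = 1"
  shows "\<exists>g\<in>{1..n}. f g v = s \<and> f g (move v s t) = t \<and> (\<forall>x\<in>{1..n}. x \<noteq> g \<longrightarrow> f x (move v s t) = f x v)"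
proof -
  let ?w = "move v s t"
  have dw: "demand_vec n k ?w" using move_demand[OF dv s t st vs] .
  from c1 have "card {a\<in>{1..n}. f a v \<noteq> f a ?w} = 1" unfolding switching_cost_def .
  then obtain g where S: "{a\<in>{1..n}. f a v \<noteq> f a ?w} = {g}"
    by (rule card_1_singletonE)
  have mem: "\<And>z. z \<in> {1..n} \<Longrightarrow> f z v \<noteq> f z ?w \<Longrightarrow> z = g" using S by blast
  have g: "g \<in> {1..n}" using S by blast
  have l1: "?w s < v s" using st vs by (simp add: move_def)
  obtain x where x: "x \<in> {1..n}" "f x v = s" "f x ?w \<noteq> s"
    using leave[OF sat dv dw s l1] by blast
  have "x = g" using mem x by metis
  have l2: "v t < ?w t" using st by (simp add: move_def)
  obtain y where y: "y \<in> {1..n}" "f y ?w = t" "f y v \<noteq> t"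
    using leave[OF sat dw dv t l2] by blast
  have "y = g" using mem y by metis
  have "\<forall>z\<in>{1..n}. z \<noteq> g \<longrightarrow> f z ?w = f z v" using mem by metis
  thus ?thesis using g x y \<open>x = g\<close> \<open>y = g\<close> by blast
qed




lemma vertex:
  assumes sat: "satisfies_demand n k f" and ms: "max_switch_le2 n k f" and dv: "demand_vec n k v"
    and a: "a \<in> {1..k}" and b: "b \<in> {1..k}" and c: "c \<in> {1..k}" and d: "d \<in> {1..k}"
    and dist: "a\<noteq>b" "a\<noteq>c" "a\<noteq>d" "b\<noteq>c" "b\<noteq>d" "c\<noteq>d"
    and va: "v a \<ge> 1" and vb: "v b \<ge> 1"
    and p: "p \<in> {1..n}" "f p v = a" "f p (move v a c) = c" "\<forall>x\<in>{1..n}. x \<noteq> p \<longrightarrow> f x (move v a c) = f x v"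
    and q: "q \<in> {1..n}" "f q v = b" "f q (move v b c) = c" "\<forall>x\<in>{1..n}. x \<noteq> q \<longrightarrow> f x (move v b c) = f x v"
  shows "((\<forall>x\<in>{1..n}. x \<noteq> p \<and> x \<noteq> q \<longrightarrow> f x (move (move v a c) b d) = f x v) \<and>
          ((f p (move (move v a c) b d) = c \<and> f q (move (move v a c) b d) = d) \<or>
           (f p (move (move v a c) b d) = d \<and> f q (move (move v a c) b d) = c))) \<or>
         (\<exists>g\<in>{1..n}. f g v = c \<and> f g (move (move v a c) b d) = d \<and>
            f p (move (move v a c) b d) = c \<and> f q (move (move v a c) b d) = c \<and>
            (\<forall>x\<in>{1..n}. x \<noteq> p \<and> x \<noteq> q \<and> x \<noteq> g \<longrightarrow> f x (move (move v a c) b d) = f x v))"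
proof -
  define xa where "xa = move v a c"
  define xb where "xb = move v b c"
  define W where "W = move xa b d"
  have dxa: "demand_vec n k xa" unfolding xa_def using move_demand[OF dv a c dist(2) va] .
  have dxb: "demand_vec n k xb" unfolding xb_def using move_demand[OF dv b c dist(4) vb] .
  have xab: "xa b \<ge> 1" using vb dist unfolding xa_def by (simp add: move_def)
  have xba: "xb a \<ge> 1" using va dist unfolding xb_def by (simp add: move_def)
  have dW: "demand_vec n k W" unfolding W_def using move_demand[OF dxa b d dist(5) xab] .
  have W2: "W = move xb a d" unfolding W_def xa_def xb_def move_def using dist by (auto simp: fun_eq_iff)
  have Ta: "\<And>x y z. x\<in>{1..n} \<Longrightarrow> y\<in>{1..n} \<Longrightarrow> z\<in>{1..n} \<Longrightarrow> x\<noteq>y \<Longrightarrow> x\<noteq>z \<Longrightarrow> y\<noteq>z \<Longrightarrow>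
     f x xa \<noteq> f x W \<Longrightarrow> f y xa \<noteq> f y W \<Longrightarrow> f z xa \<noteq> f z W \<Longrightarrow> False"
    unfolding W_def using three_diff[OF ms dxa b d dist(5) xab] by blast
  have Tb: "\<And>x y z. x\<in>{1..n} \<Longrightarrow> y\<in>{1..n} \<Longrightarrow> z\<in>{1..n} \<Longrightarrow> x\<noteq>y \<Longrightarrow> x\<noteq>z \<Longrightarrow> y\<noteq>z \<Longrightarrow>
     f x xb \<noteq> f x W \<Longrightarrow> f y xb \<noteq> f y W \<Longrightarrow> f z xb \<noteq> f z W \<Longrightarrow> False"
    unfolding W2 using three_diff[OF ms dxb a d _ xba] dist by blast
  have Wa: "W a < v a" using va dist unfolding W_def xa_def by (simp add: move_def)
  have Wb: "W b < v b" using vb dist unfolding W_def xa_def by (simp add: move_def)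
  have Wc: "W c = v c + 1" using dist unfolding W_def xa_def by (simp add: move_def)
  have Wd: "v d < W d" using dist unfolding W_def xa_def by (simp add: move_def)
  obtain la where la: "la \<in> {1..n}" "f la v = a" "f la W \<noteq> a" using leave[OF sat dv dW a Wa] by blast
  obtain lb where lb: "lb \<in> {1..n}" "f lb v = b" "f lb W \<noteq> b" using leave[OF sat dv dW b Wb] by blast
  obtain mc where mc: "mc \<in> {1..n}" "f mc W = c" "f mc v \<noteq> c" using leave[OF sat dW dv c] Wc by auto
  obtain md where md: "md \<in> {1..n}" "f md W = d" "f md v \<noteq> d" using leave[OF sat dW dv d Wd] by blast
  have pq: "p \<noteq> q" using p q dist by auto
  have pxa: "\<And>x. x \<in> {1..n} \<Longrightarrow> x \<noteq> p \<Longrightarrow> f x xa = f x v" using p unfolding xa_def by blast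
  have qxb: "\<And>x. x \<in> {1..n} \<Longrightarrow> x \<noteq> q \<Longrightarrow> f x xb = f x v" using q unfolding xb_def by blast
  have pxa': "f p xa = c" using p unfolding xa_def by blast
  have qxb': "f q xb = c" using q unfolding xb_def by blast
  have qxa: "f q xa = b" using pxa[OF q(1)] pq q by auto
  have pxb: "f p xb = a" using qxb[OF p(1)] pq p by auto
  have s1: "f p W \<noteq> a"
  proof
    assume e: "f p W = a"
    show False
    proof (rule Ta[OF p(1) la(1) lb(1)])
      show "p \<noteq> la" using e la by auto
      show "p \<noteq> lb" using p lb dist by auto
      show "la \<noteq> lb" using la lb dist by auto
      show "f p xa \<noteq> f p W" using pxa' e dist by auto
      show "f la xa \<noteq> f la W" using pxa[OF la(1)] e la by (metis)
      have "lb \<noteq> p" using lb p dist by auto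
      thus "f lb xa \<noteq> f lb W" using pxa[OF lb(1)] lb by (metis)
    qed
  qed
  have s2: "f q W \<noteq> b"
  proof
    assume e: "f q W = b"
    show False
    proof (rule Tb[OF q(1) la(1) lb(1)])
      show "q \<noteq> la" using q la dist by auto
      show "q \<noteq> lb" using e lb by auto
      show "la \<noteq> lb" using la lb dist by auto
      show "f q xb \<noteq> f q W" using qxb' e dist by auto
      have "la \<noteq> q" using la q dist by auto
      thus "f la xb \<noteq> f la W" using qxb[OF la(1)] la by (metis)
      show "f lb xb \<noteq> f lb W" using qxb[OF lb(1)] e lb by (metis)
    qed
  qed
  have ex1: "f p W = c" if x: "x \<in> {1..n}" "x \<noteq> p" "x \<noteq> q" "f x W \<noteq> f x v" for x
  proof (rule ccontr)
    assume ne: "f p W \<noteq> c"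
    show False
    proof (rule Ta[OF p(1) q(1) x(1) pq])
      show "p \<noteq> x" using x by auto
      show "q \<noteq> x" using x by auto
      show "f p xa \<noteq> f p W" using pxa' ne by auto
      show "f q xa \<noteq> f q W" using qxa s2 by auto
      show "f x xa \<noteq> f x W" using pxa[OF x(1) x(2)] x by auto
    qed
  qed
  have ex2: "f q W = c" if x: "x \<in> {1..n}" "x \<noteq> p" "x \<noteq> q" "f x W \<noteq> f x v" for x
  proof (rule ccontr)
    assume ne: "f q W \<noteq> c"
    show False
    proof (rule Tb[OF p(1) q(1) x(1) pq])
      show "p \<noteq> x" using x by auto
      show "q \<noteq> x" using x by auto
      show "f q xb \<noteq> f q W" using qxb' ne by auto
      show "f p xb \<noteq> f p W" using pxb s1 by auto
      show "f x xb \<noteq> f x W" using qxb[OF x(1) x(3)] x by auto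
    qed
  qed
  have uniq: "x = y" if x: "x \<in> {1..n}" "x \<noteq> p" "x \<noteq> q" "f x W \<noteq> f x v"
    and y: "y \<in> {1..n}" "y \<noteq> p" "y \<noteq> q" "f y W \<noteq> f y v" for x y
  proof (rule ccontr)
    assume ne: "x \<noteq> y"
    show False
    proof (rule Ta[OF q(1) x(1) y(1)])
      show "q \<noteq> x" using x by auto
      show "q \<noteq> y" using y by auto
      show "x \<noteq> y" by fact
      show "f q xa \<noteq> f q W" using qxa s2 by auto
      show "f x xa \<noteq> f x W" using pxa[OF x(1) x(2)] x by auto
      show "f y xa \<noteq> f y W" using pxa[OF y(1) y(2)] y by auto
    qed
  qed
  show ?thesis
  proof (cases "\<forall>x\<in>{1..n}. x \<noteq> p \<and> x \<noteq> q \<longrightarrow> f x W = f x v")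
    case True
    have "mc = p \<or> mc = q" using True mc by auto
    moreover have "md = p \<or> md = q" using True md by auto
    moreover have "mc \<noteq> md" using mc md dist by auto
    ultimately have "(f p W = c \<and> f q W = d) \<or> (f p W = d \<and> f q W = c)" using mc md by auto
    thus ?thesis using True unfolding W_def xa_def by blast
  next
    case False
    then obtain x where x: "x \<in> {1..n}" "x \<noteq> p" "x \<noteq> q" "f x W \<noteq> f x v" by blast
    have pc: "f p W = c" using ex1[OF x] .
    have qc: "f q W = c" using ex2[OF x] .
    have mdp: "md \<noteq> p" "md \<noteq> q" using md pc qc dist by auto
    have mdx: "f md W \<noteq> f md v" using md by auto
    have un: "\<And>y. y \<in> {1..n} \<Longrightarrow> y \<noteq> p \<Longrightarrow> y \<noteq> q \<Longrightarrow> y \<noteq> md \<Longrightarrow> f y W = f y v"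
      using uniq[OF md(1) mdp mdx] by blast
    have mdc: "f md v = c"
    proof (rule ccontr)
      assume ne: "f md v \<noteq> c"
      define S0 where "S0 = {x\<in>{1..n}. f x v = c}"
      define S where "S = {x\<in>{1..n}. f x W = c}"
      have sub: "insert p (insert q S0) \<subseteq> S"
      proof
        fix y assume "y \<in> insert p (insert q S0)"
        then consider "y = p" | "y = q" | "y \<in> S0" by blast
        then show "y \<in> S"
        proof cases
          case 1 thus ?thesis using p(1) pc unfolding S_def by auto
        next
          case 2 thus ?thesis using q(1) qc unfolding S_def by auto
        next
          case 3
          hence y: "y \<in> {1..n}" "f y v = c" unfolding S0_def by auto
          have "y \<noteq> p" "y \<noteq> q" "y \<noteq> md" using y p q ne dist by auto
          hence "f y W = f y v" using un y(1) by blast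
          thus ?thesis using y unfolding S_def by auto
        qed
      qed
      have fin: "finite S0" unfolding S0_def by auto
      have "p \<notin> insert q S0" using pq p dist unfolding S0_def by auto
      moreover have "q \<notin> S0" using q dist unfolding S0_def by auto
      ultimately have "card (insert p (insert q S0)) = card S0 + 2" using fin by simp
      moreover have "card (insert p (insert q S0)) \<le> card S" using sub unfolding S_def by (intro card_mono) auto
      moreover have "card S0 = v c" using sat dv c unfolding S0_def satisfies_demand_def by blast
      moreover have "card S = W c" using sat dW c unfolding S_def satisfies_demand_def by blast
      ultimately show False using Wc by simp
    qed
    have "\<exists>g\<in>{1..n}. f g v = c \<and> f g W = d \<and> f p W = c \<and> f q W = c \<and>
            (\<forall>x\<in>{1..n}. x \<noteq> p \<and> x \<noteq> q \<and> x \<noteq> g \<longrightarrow> f x W = f x v)"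
      using md mdc pc qc un by blast
    thus ?thesis unfolding W_def xa_def by blast
  qed
qed




lemma core:
  assumes sat: "satisfies_demand n k f" and ms: "max_switch_le2 n k f" and dv: "demand_vec n k v"
    and T1: "T1 \<in> {1..k}" and T2: "T2 \<in> {1..k}" and a: "a \<in> {1..k}" and b: "b \<in> {1..k}"
    and c: "c \<in> {1..k}" and u: "u \<in> {1..k}"
    and dist: "T1 \<noteq> T2" "a \<noteq> b" "a \<noteq> T1" "a \<noteq> T2" "b \<noteq> T1" "b \<noteq> T2" "c \<noteq> T1" "c \<noteq> a" "c \<noteq> b"
      "u \<noteq> T1" "u \<noteq> T2" "u \<noteq> a" "u \<noteq> b" "u \<noteq> c"
    and va: "v a \<ge> 1" and vb: "v b \<ge> 1" and vc: "v c \<ge> 1"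
    and ty1: "type1 n k f v T1" and ty2: "type1 n k f v T2"
  shows False
proof -
  have mv: "\<And>s t. s \<in> {1..k} \<Longrightarrow> t \<in> {1..k} \<Longrightarrow> s \<noteq> t \<Longrightarrow> v s \<ge> 1 \<Longrightarrow> type1 n k f v t \<Longrightarrow>
      \<exists>g\<in>{1..n}. f g v = s \<and> f g (move v s t) = t \<and> (\<forall>x\<in>{1..n}. x \<noteq> g \<longrightarrow> f x (move v s t) = f x v)"
    using cost1[OF sat dv] unfolding type1_def by blast
  obtain p where p: "p \<in> {1..n}" "f p v = a" "f p (move v a T1) = T1" "\<forall>x\<in>{1..n}. x \<noteq> p \<longrightarrow> f x (move v a T1) = f x v"
    using mv[OF a T1 dist(3) va ty1] by blast
  obtain q where q: "q \<in> {1..n}" "f q v = b" "f q (move v b T1) = T1" "\<forall>x\<in>{1..n}. x \<noteq> q \<longrightarrow> f x (move v b T1) = f x v"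
    using mv[OF b T1 dist(5) vb ty1] by blast
  obtain r where r: "r \<in> {1..n}" "f r v = c" "f r (move v c T1) = T1" "\<forall>x\<in>{1..n}. x \<noteq> r \<longrightarrow> f x (move v c T1) = f x v"
    using mv[OF c T1 dist(7) vc ty1] by blast
  obtain p' where p': "p' \<in> {1..n}" "f p' v = a" "f p' (move v a T2) = T2" "\<forall>x\<in>{1..n}. x \<noteq> p' \<longrightarrow> f x (move v a T2) = f x v"
    using mv[OF a T2 dist(4) va ty2] by blast
  obtain q' where q': "q' \<in> {1..n}" "f q' v = b" "f q' (move v b T2) = T2" "\<forall>x\<in>{1..n}. x \<noteq> q' \<longrightarrow> f x (move v b T2) = f x v"
    using mv[OF b T2 dist(6) vb ty2] by blast
  define E where "E = move (move v a T1) b u"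
  define A where "A = move (move v a T2) b u"
  define B where "B = move (move v a T1) c u"
  define C where "C = move (move v b T1) c u"
  have VE: "((\<forall>x\<in>{1..n}. x \<noteq> p \<and> x \<noteq> q \<longrightarrow> f x E = f x v) \<and>
          ((f p E = T1 \<and> f q E = u) \<or> (f p E = u \<and> f q E = T1))) \<or>
         (\<exists>g\<in>{1..n}. f g v = T1 \<and> f g E = u \<and> f p E = T1 \<and> f q E = T1 \<and>
            (\<forall>x\<in>{1..n}. x \<noteq> p \<and> x \<noteq> q \<and> x \<noteq> g \<longrightarrow> f x E = f x v))"
    unfolding E_def by (rule vertex[OF sat ms dv a b T1 u]) (use dist va vb p q in auto)
  have VA: "((\<forall>x\<in>{1..n}. x \<noteq> p' \<and> x \<noteq> q' \<longrightarrow> f x A = f x v) \<and>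
          ((f p' A = T2 \<and> f q' A = u) \<or> (f p' A = u \<and> f q' A = T2))) \<or>
         (\<exists>g\<in>{1..n}. f g v = T2 \<and> f g A = u \<and> f p' A = T2 \<and> f q' A = T2 \<and>
            (\<forall>x\<in>{1..n}. x \<noteq> p' \<and> x \<noteq> q' \<and> x \<noteq> g \<longrightarrow> f x A = f x v))"
    unfolding A_def by (rule vertex[OF sat ms dv a b T2 u]) (use dist va vb p' q' in auto)
  have VB: "((\<forall>x\<in>{1..n}. x \<noteq> p \<and> x \<noteq> r \<longrightarrow> f x B = f x v) \<and>
          ((f p B = T1 \<and> f r B = u) \<or> (f p B = u \<and> f r B = T1))) \<or>
         (\<exists>g\<in>{1..n}. f g v = T1 \<and> f g B = u \<and> f p B = T1 \<and> f r B = T1 \<and>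
            (\<forall>x\<in>{1..n}. x \<noteq> p \<and> x \<noteq> r \<and> x \<noteq> g \<longrightarrow> f x B = f x v))"
    unfolding B_def by (rule vertex[OF sat ms dv a c T1 u]) (use dist va vc p r in auto)
  have VC: "((\<forall>x\<in>{1..n}. x \<noteq> q \<and> x \<noteq> r \<longrightarrow> f x C = f x v) \<and>
          ((f q C = T1 \<and> f r C = u) \<or> (f q C = u \<and> f r C = T1))) \<or>
         (\<exists>g\<in>{1..n}. f g v = T1 \<and> f g C = u \<and> f q C = T1 \<and> f r C = T1 \<and>
            (\<forall>x\<in>{1..n}. x \<noteq> q \<and> x \<noteq> r \<and> x \<noteq> g \<longrightarrow> f x C = f x v))"
    unfolding C_def by (rule vertex[OF sat ms dv b c T1 u]) (use dist vb vc q r in auto)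
  have d1: "demand_vec n k (move v a T1)" using move_demand[OF dv a T1 dist(3) va] .
  have dE: "demand_vec n k E" unfolding E_def
    using move_demand[OF d1 b u dist(13)[symmetric]] vb dist by (simp add: move_def)
  have d2: "demand_vec n k (move v a T1)" using move_demand[OF dv a T1 dist(3) va] .
  have dB: "demand_vec n k B" unfolding B_def
    using move_demand[OF d1 c u dist(14)[symmetric]] vc dist by (simp add: move_def)
  have AE: "A = move E T1 T2" unfolding A_def E_def move_def using dist by (auto simp: fun_eq_iff)
  have BE: "B = move E c b" unfolding B_def E_def move_def using dist va vb vc by (auto simp: fun_eq_iff)
  have CE: "C = move E c a" unfolding C_def E_def move_def using dist va vb vc by (auto simp: fun_eq_iff)
  have CB: "C = move B b a" unfolding C_def B_def move_def using dist va vb vc by (auto simp: fun_eq_iff)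
  have ET1: "E T1 \<ge> 1" unfolding E_def using dist by (simp add: move_def)
  have Ec: "E c \<ge> 1" unfolding E_def using dist vc by (simp add: move_def)
  have Bb: "B b \<ge> 1" unfolding B_def using dist vb by (simp add: move_def)
  have TEA: "\<And>x y z. x\<in>{1..n} \<Longrightarrow> y\<in>{1..n} \<Longrightarrow> z\<in>{1..n} \<Longrightarrow> x\<noteq>y \<Longrightarrow> x\<noteq>z \<Longrightarrow> y\<noteq>z \<Longrightarrow>
     f x E \<noteq> f x A \<Longrightarrow> f y E \<noteq> f y A \<Longrightarrow> f z E \<noteq> f z A \<Longrightarrow> False"
    unfolding AE using three_diff[OF ms dE T1 T2 dist(1) ET1] by blast
  have TEB: "\<And>x y z. x\<in>{1..n} \<Longrightarrow> y\<in>{1..n} \<Longrightarrow> z\<in>{1..n} \<Longrightarrow> x\<noteq>y \<Longrightarrow> x\<noteq>z \<Longrightarrow> y\<noteq>z \<Longrightarrow>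
     f x E \<noteq> f x B \<Longrightarrow> f y E \<noteq> f y B \<Longrightarrow> f z E \<noteq> f z B \<Longrightarrow> False"
    unfolding BE using three_diff[OF ms dE c b dist(9) Ec] by blast
  have TEC: "\<And>x y z. x\<in>{1..n} \<Longrightarrow> y\<in>{1..n} \<Longrightarrow> z\<in>{1..n} \<Longrightarrow> x\<noteq>y \<Longrightarrow> x\<noteq>z \<Longrightarrow> y\<noteq>z \<Longrightarrow>
     f x E \<noteq> f x C \<Longrightarrow> f y E \<noteq> f y C \<Longrightarrow> f z E \<noteq> f z C \<Longrightarrow> False"
    unfolding CE using three_diff[OF ms dE c a dist(8) Ec] by blast
  have TBC: "\<And>x y z. x\<in>{1..n} \<Longrightarrow> y\<in>{1..n} \<Longrightarrow> z\<in>{1..n} \<Longrightarrow> x\<noteq>y \<Longrightarrow> x\<noteq>z \<Longrightarrow> y\<noteq>z \<Longrightarrow>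
     f x B \<noteq> f x C \<Longrightarrow> f y B \<noteq> f y C \<Longrightarrow> f z B \<noteq> f z C \<Longrightarrow> False"
    unfolding CB using three_diff[OF ms dB b a dist(2)[symmetric] Bb] by blast
  have pq: "p \<noteq> q" "p \<noteq> r" "q \<noteq> r" using p q r dist by auto
  have noA: "(f x A = T1) = (f x v = T1)" if x: "x \<in> {1..n}" for x
  proof (rule disjE[OF VA])
    assume H: "(\<forall>x\<in>{1..n}. x \<noteq> p' \<and> x \<noteq> q' \<longrightarrow> f x A = f x v) \<and>
          ((f p' A = T2 \<and> f q' A = u) \<or> (f p' A = u \<and> f q' A = T2))"
    show ?thesis
    proof (cases "x = p' \<or> x = q'")
      case True
      then show ?thesis using H p'(2) q'(2) dist by (elim disjE conjE) simp_all
    next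
      case False
      then show ?thesis using H x by simp
    qed
  next
    assume "\<exists>g\<in>{1..n}. f g v = T2 \<and> f g A = u \<and> f p' A = T2 \<and> f q' A = T2 \<and>
            (\<forall>x\<in>{1..n}. x \<noteq> p' \<and> x \<noteq> q' \<and> x \<noteq> g \<longrightarrow> f x A = f x v)"
    then obtain g where g: "g \<in> {1..n}" "f g v = T2" "f g A = u" "f p' A = T2" "f q' A = T2"
      and oth: "\<forall>x\<in>{1..n}. x \<noteq> p' \<and> x \<noteq> q' \<and> x \<noteq> g \<longrightarrow> f x A = f x v" by blast
    show ?thesis
    proof (cases "x = p' \<or> x = q' \<or> x = g")
      case True
      then show ?thesis using g p'(2) q'(2) dist by (elim disjE) simp_all
    next
      case False
      then show ?thesis using oth x by simp
    qed
  qed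
  have EI: "(\<forall>x\<in>{1..n}. x \<noteq> p \<and> x \<noteq> q \<longrightarrow> f x E = f x v) \<and>
          ((f p E = T1 \<and> f q E = u) \<or> (f p E = u \<and> f q E = T1))"
  proof (rule ccontr)
    assume "\<not> ?thesis"
    then obtain g where g: "g \<in> {1..n}" "f g v = T1" "f g E = u" "f p E = T1" "f q E = T1" using VE by blast
    have pA: "f p A \<noteq> T1" using noA[OF p(1)] p(2) dist(3) by simp
    have qA: "f q A \<noteq> T1" using noA[OF q(1)] q(2) dist(5) by simp
    have gA: "f g A = T1" using noA[OF g(1)] g(2) by simp
    show False
    proof (rule TEA[OF p(1) q(1) g(1) pq(1)])
      show "p \<noteq> g" using p(2) g(2) dist(3) by auto
      show "q \<noteq> g" using q(2) g(2) dist(5) by auto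
      show "f p E \<noteq> f p A" using pA g(4) by simp
      show "f q E \<noteq> f q A" using qA g(5) by simp
      show "f g E \<noteq> f g A" using gA g(3) dist(10) by simp
    qed
  qed
  have EIo: "\<And>x. x\<in>{1..n} \<Longrightarrow> x \<noteq> p \<Longrightarrow> x \<noteq> q \<Longrightarrow> f x E = f x v" using EI by blast
  have pE: "f p E = T1 \<or> f p E = u" and qE: "f q E = T1 \<or> f q E = u" and pqE: "f p E \<noteq> f q E"
    using EI dist(10) by auto
  have rE: "f r E = c" using EIo[OF r(1)] r(2) pq by simp
  have BI: "(\<forall>x\<in>{1..n}. x \<noteq> p \<and> x \<noteq> r \<longrightarrow> f x B = f x v) \<and>
          ((f p B = T1 \<and> f r B = u) \<or> (f p B = u \<and> f r B = T1))"
  proof (rule ccontr)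
    assume "\<not> ?thesis"
    then obtain g where g: "g \<in> {1..n}" "f g v = T1" "f g B = u" "f p B = T1" "f r B = T1"
      and oth: "\<forall>x\<in>{1..n}. x \<noteq> p \<and> x \<noteq> r \<and> x \<noteq> g \<longrightarrow> f x B = f x v" using VB by blast
    have gpq: "g \<noteq> p" "g \<noteq> q" "g \<noteq> r" using g(2) p(2) q(2) r(2) dist by auto
    have qB: "f q B = b" using oth q(1) q(2) gpq pq by auto
    show False
    proof (rule TEB[OF r(1) g(1) q(1)])
      show "r \<noteq> g" "r \<noteq> q" "g \<noteq> q" using gpq pq by auto
      show "f r E \<noteq> f r B" using rE g(5) dist(7) by simp
      show "f g E \<noteq> f g B" using EIo[OF g(1) gpq(1,2)] g(2,3) dist(10) by simp
      show "f q E \<noteq> f q B" using qE qB dist(5,13) by auto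
    qed
  qed
  have CI: "(\<forall>x\<in>{1..n}. x \<noteq> q \<and> x \<noteq> r \<longrightarrow> f x C = f x v) \<and>
          ((f q C = T1 \<and> f r C = u) \<or> (f q C = u \<and> f r C = T1))"
  proof (rule ccontr)
    assume "\<not> ?thesis"
    then obtain g where g: "g \<in> {1..n}" "f g v = T1" "f g C = u" "f q C = T1" "f r C = T1"
      and oth: "\<forall>x\<in>{1..n}. x \<noteq> q \<and> x \<noteq> r \<and> x \<noteq> g \<longrightarrow> f x C = f x v" using VC by blast
    have gpq: "g \<noteq> p" "g \<noteq> q" "g \<noteq> r" using g(2) p(2) q(2) r(2) dist by auto
    have pC: "f p C = a" using oth p(1) p(2) gpq pq by auto
    show False
    proof (rule TEC[OF r(1) g(1) p(1)])
      show "r \<noteq> g" "r \<noteq> p" "g \<noteq> p" using gpq pq by auto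
      show "f r E \<noteq> f r C" using rE g(5) dist(7) by simp
      show "f g E \<noteq> f g C" using EIo[OF g(1) gpq(1,2)] g(2,3) dist(10) by simp
      show "f p E \<noteq> f p C" using pE pC dist(3,12) by auto
    qed
  qed
  have BIo: "\<And>x. x\<in>{1..n} \<Longrightarrow> x \<noteq> p \<Longrightarrow> x \<noteq> r \<Longrightarrow> f x B = f x v" using BI by blast
  have CIo: "\<And>x. x\<in>{1..n} \<Longrightarrow> x \<noteq> q \<Longrightarrow> x \<noteq> r \<Longrightarrow> f x C = f x v" using CI by blast
  have pB: "f p B = T1 \<or> f p B = u" and rB: "f r B = T1 \<or> f r B = u" and prB: "f p B \<noteq> f r B"
    using BI dist(10) by auto
  have qC: "f q C = T1 \<or> f q C = u" and rC: "f r C = T1 \<or> f r C = u" and qrC: "f q C \<noteq> f r C"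
    using CI dist(10) by auto
  have qB: "f q B = b" using BIo[OF q(1)] q(2) pq by auto
  have pC: "f p C = a" using CIo[OF p(1)] p(2) pq by auto
  have e1: "f p E = f p B"
  proof (rule ccontr)
    assume ne: "f p E \<noteq> f p B"
    show False
    proof (rule TEB[OF p(1) q(1) r(1) pq])
      show "f p E \<noteq> f p B" by fact
      show "f q E \<noteq> f q B" using qE qB dist(5,13) by auto
      show "f r E \<noteq> f r B" using rE rB dist(7,14) by auto
    qed
  qed
  have e2: "f q E = f q C"
  proof (rule ccontr)
    assume ne: "f q E \<noteq> f q C"
    show False
    proof (rule TEC[OF p(1) q(1) r(1) pq])
      show "f q E \<noteq> f q C" by fact
      show "f p E \<noteq> f p C" using pE pC dist(3,12) by auto
      show "f r E \<noteq> f r C" using rE rC dist(7,14) by auto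
    qed
  qed
  have e3: "f r B = f r C"
  proof (rule ccontr)
    assume ne: "f r B \<noteq> f r C"
    show False
    proof (rule TBC[OF p(1) q(1) r(1) pq])
      show "f r B \<noteq> f r C" by fact
      show "f p B \<noteq> f p C" using pB pC dist(3,12) by auto
      show "f q B \<noteq> f q C" using qC qB dist(5,13) by auto
    qed
  qed
  show False using pE qE pqE rB prB rC qrC e1 e2 e3 by auto
qed




lemma pick:
  assumes "finite S" "card (set xs) < card S"
  shows "\<exists>x\<in>S. x \<notin> set xs"
proof (rule ccontr)
  assume "\<not> ?thesis"
  hence "S \<subseteq> set xs" by blast
  hence "card S \<le> card (set xs)" by (intro card_mono) auto
  thus False using assms by simp
qed

lemma pick':
  assumes "finite S" "length xs < card S"
  shows "\<exists>x\<in>S. x \<notin> set xs"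
  using pick[OF assms(1)] card_length[of xs] assms(2) by (meson le_less_trans)

theorem lemma4p5:
  fixes n k :: nat and f :: "nat \<Rightarrow> (nat \<Rightarrow> nat) \<Rightarrow> nat" and v :: "nat \<Rightarrow> nat"
  assumes "n \<ge> 4" and "k \<ge> 5"
    and "satisfies_demand n k f"
    and "max_switch_le2 n k f"
    and "demand_vec n k v"
    and "card {j\<in>{1..k}. v j \<noteq> 0} \<ge> 4"
  shows "card {t\<in>{1..k}. type1 n k f v t} \<le> 1"
proof (rule ccontr)
  assume H: "\<not> card {t\<in>{1..k}. type1 n k f v t} \<le> 1"
  hence c2: "length [] < card {t\<in>{1..k}. type1 n k f v t}" by simp
  obtain t1 where t1: "t1 \<in> {1..k}" "type1 n k f v t1"
    using pick'[OF _ c2] by auto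
  have "length [t1] < card {t\<in>{1..k}. type1 n k f v t}" using H by simp
  then obtain t2 where t2: "t2 \<in> {1..k}" "type1 n k f v t2" "t2 \<noteq> t1"
    using pick'[of "{t\<in>{1..k}. type1 n k f v t}" "[t1]"] by auto
  define N where "N = {j\<in>{1..k}. v j \<noteq> 0}"
  have fN: "finite N" unfolding N_def by auto
  have cN: "card N \<ge> 4" unfolding N_def using assms(6) .
  obtain a where a: "a \<in> N" "a \<noteq> t1" "a \<noteq> t2" using pick'[OF fN, of "[t1,t2]"] cN by auto
  obtain b where b: "b \<in> N" "b \<noteq> t1" "b \<noteq> t2" "b \<noteq> a" using pick'[OF fN, of "[t1,t2,a]"] cN by auto
  have fK: "finite {1..k}" by simp
  have cK: "card {1..k} = k" by simp
  obtain w where w: "w \<in> {1..k}" "w \<noteq> t1" "w \<noteq> t2" "w \<noteq> a" "w \<noteq> b"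
    using pick'[OF fK, of "[t1,t2,a,b]"] cK assms(2) by auto
  have aK: "a \<in> {1..k}" "v a \<ge> 1" and bK: "b \<in> {1..k}" "v b \<ge> 1" using a b unfolding N_def by auto
  show False
  proof (cases "v t2 \<noteq> 0")
    case True
    show False
      by (rule core[OF assms(3,4,5) t1(1) t2(1) aK(1) bK(1) t2(1) w(1) _ _ _ _ _ _ _ _ _ _ _ _ _ _ aK(2) bK(2) _ t1(2) t2(2)])
         (use a b t2 w True in auto)
  next
    case F2: False
    show False
    proof (cases "v t1 \<noteq> 0")
      case True
      show False
        by (rule core[OF assms(3,4,5) t2(1) t1(1) aK(1) bK(1) t1(1) w(1) _ _ _ _ _ _ _ _ _ _ _ _ _ _ aK(2) bK(2) _ t2(2) t1(2)])
           (use a b t2 w True in auto)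
    next
      case F1: False
      obtain c where c: "c \<in> N" "c \<noteq> a" "c \<noteq> b" using pick'[OF fN, of "[a,b]"] cN by auto
      obtain u where u: "u \<in> N" "u \<noteq> a" "u \<noteq> b" "u \<noteq> c" using pick'[OF fN, of "[a,b,c]"] cN by auto
      have cK: "c \<in> {1..k}" "v c \<ge> 1" "c \<noteq> t1" "c \<noteq> t2" using c F1 F2 unfolding N_def by auto
      have uK: "u \<in> {1..k}" "u \<noteq> t1" "u \<noteq> t2" using u F1 F2 unfolding N_def by auto
      show False
        by (rule core[OF assms(3,4,5) t1(1) t2(1) aK(1) bK(1) cK(1) uK(1) _ _ _ _ _ _ _ _ _ _ _ _ _ _ aK(2) bK(2) cK(2) t1(2) t2(2)])
           (use a b c u cK uK t2 in auto)
    qed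
  qed
qed


end
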